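(* Let $(X,\le)$ be a partially ordered set such that $\widehat D$ is directed for every directed $D\subset X$, and let $(\overline X,\iota)$ be its directed completion. Then: (1) $\iota(X)^\uparrow=\overline X$, where for $A\subset\overline X$, $A^\uparrow$ denotes the set of suprema of directed subsets of $A$; (2) a directed completion of $X$ is given by $\{A\subset X:\ A=\widehat A\text{ and }A\text{ is directed}\}$ ordered by inclusion, together with the map $x\mapsto\downarrow x$; (3) if $(Y,\le)$ is a dcpo and $j:X\to Y$ a map, then $(Y,j)$ is a directed completion of $X$ if and only if $j(X)$ is dense in $Y$ and for every directed $B\subset X$ and every $a\in X$ we have $j(a)\in\widehat{j(B)}$ (in $Y$) if and only if $a\in\widehat B$ (in $X$).
   Context: Let $(X,\le)$ be a partially ordered set. A subset $D\subset X$ is directed if every finite subset of $D$ (including the empty one) has an upper bound in $D$; in particular directed sets are nonempty. $A\subset X$ is a lower set if $x\in A$ and $y\le x$ imply $y\in A$; $\downarrow a:=\{x\in X:x\le a\}$. $(X,\le)$ is a directed complete partial order (dcpo) if every directed subset has a supremum. A subset $A\subset X$ is directed-sup-closed if the supremum of every directed $D\subset A$ which has a supremum in $X$ belongs to $A$. For $A\subset X$, $\overline A$ is the smallest directed-sup-closed subset of $X$ containing $A$, and $\widehat A$ is the smallest subset of $X$ containing $A$ which is both a lower set and directed-sup-closed. $A$ is dense if $\overline A=X$. A map $T:X_1\to X_2$ between partially ordered sets has the Monotone Convergence Property (Mcp) if for every directed $D\subset X_1$ having a supremum, $T(D)$ has a supremum and $T(\sup D)=\sup T(D)$. A directed completion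 of $(X,\le)$ is a dcpo $(\overline X,\bar\le)$ together with a map $\iota:X\to\overline X$ with the Mcp such that for every dcpo $Z$ and every map $T:X\to Z$ with the Mcp there is a unique map $\bar T:\overline X\to Z$ with the Mcp satisfying $\bar T\circ\iota=T$. *)

theory Defs
  imports Main
begin

text \<open>A partially ordered set is represented by a carrier set together with a relation
on the ambient type (relativised to the carrier).\<close>

definition poset :: "'a set \<Rightarrow> ('a \<Rightarrow> 'a \<Rightarrow> bool) \<Rightarrow> bool" where
  "poset A le \<longleftrightarrow>
     (\<forall>x\<in>A. le x x) \<and>
     (\<forall>x\<in>A. \<forall>y\<in>A. le x y \<and> le y x \<longrightarrow> x = y) \<and>
     (\<forall>x\<in>A. \<forall>y\<in>A. \<forall>z\<in>A. le x y \<and> le y z \<longrightarrow> le x z)"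

text \<open>Directed: every finite subset (including the empty one) has an upper bound in D.\<close>
definition directed :: "'a set \<Rightarrow> ('a \<Rightarrow> 'a \<Rightarrow> bool) \<Rightarrow> 'a set \<Rightarrow> bool" where
  "directed A le D \<longleftrightarrow> D \<subseteq> A \<and>
     (\<forall>F. finite F \<and> F \<subseteq> D \<longrightarrow> (\<exists>u\<in>D. \<forall>x\<in>F. le x u))"

definition is_sup :: "'a set \<Rightarrow> ('a \<Rightarrow> 'a \<Rightarrow> bool) \<Rightarrow> 'a set \<Rightarrow> 'a \<Rightarrow> bool" where
  "is_sup A le D s \<longleftrightarrow> s \<in> A \<and> (\<forall>x\<in>D. le x s) \<and>
     (\<forall>u\<in>A. (\<forall>x\<in>D. le x u) \<longrightarrow> le s u)"

definition dcpo :: "'a set \<Rightarrow> ('a \<Rightarrow> 'a \<Rightarrow> bool) \<Rightarrow> bool" where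
  "dcpo A le \<longleftrightarrow> poset A le \<and> (\<forall>D. directed A le D \<longrightarrow> (\<exists>s. is_sup A le D s))"

definition lower_set :: "'a set \<Rightarrow> ('a \<Rightarrow> 'a \<Rightarrow> bool) \<Rightarrow> 'a set \<Rightarrow> bool" where
  "lower_set A le S \<longleftrightarrow> S \<subseteq> A \<and> (\<forall>x\<in>S. \<forall>y\<in>A. le y x \<longrightarrow> y \<in> S)"

definition down :: "'a set \<Rightarrow> ('a \<Rightarrow> 'a \<Rightarrow> bool) \<Rightarrow> 'a \<Rightarrow> 'a set" where
  "down A le a = {x \<in> A. le x a}"

definition dsup_closed :: "'a set \<Rightarrow> ('a \<Rightarrow> 'a \<Rightarrow> bool) \<Rightarrow> 'a set \<Rightarrow> bool" where
  "dsup_closed A le S \<longleftrightarrow> S \<subseteq> A \<and>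
     (\<forall>D s. directed A le D \<and> D \<subseteq> S \<and> is_sup A le D s \<longrightarrow> s \<in> S)"

definition dclosure :: "'a set \<Rightarrow> ('a \<Rightarrow> 'a \<Rightarrow> bool) \<Rightarrow> 'a set \<Rightarrow> 'a set" where
  "dclosure A le S = \<Inter>{C. S \<subseteq> C \<and> dsup_closed A le C}"

definition hat :: "'a set \<Rightarrow> ('a \<Rightarrow> 'a \<Rightarrow> bool) \<Rightarrow> 'a set \<Rightarrow> 'a set" where
  "hat A le S = \<Inter>{C. S \<subseteq> C \<and> lower_set A le C \<and> dsup_closed A le C}"

definition dense :: "'a set \<Rightarrow> ('a \<Rightarrow> 'a \<Rightarrow> bool) \<Rightarrow> 'a set \<Rightarrow> bool" where
  "dense A le S \<longleftrightarrow> dclosure A le S = A"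

definition dsups :: "'a set \<Rightarrow> ('a \<Rightarrow> 'a \<Rightarrow> bool) \<Rightarrow> 'a set \<Rightarrow> 'a set" where
  "dsups A le S = {s. \<exists>D. directed A le D \<and> D \<subseteq> S \<and> is_sup A le D s}"

definition mcp :: "'a set \<Rightarrow> ('a \<Rightarrow> 'a \<Rightarrow> bool) \<Rightarrow> 'b set \<Rightarrow> ('b \<Rightarrow> 'b \<Rightarrow> bool)
                   \<Rightarrow> ('a \<Rightarrow> 'b) \<Rightarrow> bool" where
  "mcp A1 le1 A2 le2 T \<longleftrightarrow> T ` A1 \<subseteq> A2 \<and>
     (\<forall>D s. directed A1 le1 D \<and> is_sup A1 le1 D s \<longrightarrow> is_sup A2 le2 (T ` D) (T s))"

text \<open>Directed completion, with the universal property tested against all dcpos Z whose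
carrier lives in the type 'z (HOL cannot quantify over types inside a formula).\<close>
definition directed_completion ::
  "'z itself \<Rightarrow> 'a set \<Rightarrow> ('a \<Rightarrow> 'a \<Rightarrow> bool) \<Rightarrow> 'b set \<Rightarrow> ('b \<Rightarrow> 'b \<Rightarrow> bool)
   \<Rightarrow> ('a \<Rightarrow> 'b) \<Rightarrow> bool" where
  "directed_completion (_ :: 'z itself) X le Xb leb \<iota> \<longleftrightarrow>
     dcpo Xb leb \<and> mcp X le Xb leb \<iota> \<and>
     (\<forall>(Z :: 'z set) leZ T. dcpo Z leZ \<and> mcp X le Z leZ T \<longrightarrow>
        (\<exists>Tb. mcp Xb leb Z leZ Tb \<and> (\<forall>x\<in>X. Tb (\<iota> x) = T x) \<and>
           (\<forall>Tb'. mcp Xb leb Z leZ Tb' \<and> (\<forall>x\<in>X. Tb' (\<iota> x) = T x) \<longrightarrow>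
                  (\<forall>y\<in>Xb. Tb' y = Tb y))))"

end

theory Submission
  imports Defs
begin

lemma posetD:
  assumes "poset A le"
  shows "x\<in>A \<Longrightarrow> le x x"
    and "x\<in>A \<Longrightarrow> y\<in>A \<Longrightarrow> le x y \<Longrightarrow> le y x \<Longrightarrow> x = y"
    and "x\<in>A \<Longrightarrow> y\<in>A \<Longrightarrow> z\<in>A \<Longrightarrow> le x y \<Longrightarrow> le y z \<Longrightarrow> le x z"
  using assms unfolding poset_def by blast+

lemma directed_sub: "directed A le D \<Longrightarrow> D \<subseteq> A"
  unfolding directed_def by blast

lemma directed_ne: "directed A le D \<Longrightarrow> \<exists>u. u \<in> D"
  unfolding directed_def by (meson empty_subsetI finite.emptyI)

lemma directed_pair: "directed A le D \<Longrightarrow> x\<in>D \<Longrightarrow> y\<in>D \<Longrightarrow> \<exists>z\<in>D. le x z \<and> le y z"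
  unfolding directed_def apply (erule conjE) apply (drule spec[of _ "{x,y}"]) by auto

lemma directedI:
  assumes "poset A le" "D \<subseteq> A" "D \<noteq> {}"
    "\<And>x y. x\<in>D \<Longrightarrow> y\<in>D \<Longrightarrow> \<exists>z\<in>D. le x z \<and> le y z"
  shows "directed A le D"
proof -
  have "finite F \<Longrightarrow> F \<subseteq> D \<longrightarrow> (\<exists>u\<in>D. \<forall>x\<in>F. le x u)" for F
  proof (induction F rule: finite_induct)
    case empty then show ?case using assms(3) by auto
  next
    case (insert x F)
    show ?case proof
      assume xF: "insert x F \<subseteq> D"
      then obtain u where u: "u\<in>D" "\<forall>y\<in>F. le y u" using insert.IH by auto
      obtain z where z: "z\<in>D" "le x z" "le u z" using assms(4)[of x u] xF u by auto
      have "\<forall>y\<in>insert x F. le y z"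
      proof
        fix y assume "y \<in> insert x F"
        then show "le y z"
        proof
          assume "y = x" then show ?thesis using z by simp
        next
          assume "y \<in> F"
          then show ?thesis using posetD(3)[OF assms(1), of y u z] u z xF assms(2) by blast
        qed
      qed
      then show "\<exists>u\<in>D. \<forall>y\<in>insert x F. le y u" using z by auto
    qed
  qed
  then show ?thesis using assms(2) unfolding directed_def by auto
qed

lemma is_sup_unique: assumes "poset A le" "is_sup A le D s" "is_sup A le D t" shows "s = t"
proof -
  have "le s t" "le t s" "s\<in>A" "t\<in>A" using assms(2,3) unfolding is_sup_def by blast+
  then show ?thesis using posetD(2)[OF assms(1)] by blast
qed

lemma is_sup_single: "poset A le \<Longrightarrow> x\<in>A \<Longrightarrow> is_sup A le {x} x"
  using posetD(1)[of A le x] unfolding is_sup_def by blast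

lemma directed_single: assumes "poset A le" "x\<in>A" shows "directed A le {x}"
  by (rule directedI[OF assms(1)]) (use assms posetD(1)[OF assms(1)] in blast)+

lemma mcp_into: "mcp X le Y leY j \<Longrightarrow> x\<in>X \<Longrightarrow> j x \<in> Y"
  unfolding mcp_def by blast

lemma mcp_sup: "mcp X le Y leY j \<Longrightarrow> directed X le D \<Longrightarrow> is_sup X le D s \<Longrightarrow> is_sup Y leY (j ` D) (j s)"
  unfolding mcp_def by blast

lemma mcp_mono:
  assumes "poset X le" "mcp X le Y leY j" "x\<in>X" "y\<in>X" "le x y"
  shows "leY (j x) (j y)"
proof -
  have r: "le x x" "le y y" using posetD(1)[OF assms(1)] assms(3,4) by blast+
  have "directed X le {x,y}"
  proof (rule directedI[OF assms(1)])
    show "{x, y} \<subseteq> X" using assms(3,4) by blast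
    show "{x, y} \<noteq> {}" by blast
    fix a b assume "a \<in> {x,y}" "b \<in> {x,y}"
      then show "\<exists>z\<in>{x, y}. le a z \<and> le b z" using r assms(5) by auto
  qed
  moreover have "is_sup X le {x,y} y" using assms(4,5) r unfolding is_sup_def by simp
  ultimately have "is_sup Y leY (j ` {x,y}) (j y)" by (rule mcp_sup[OF assms(2)])
  then have "\<forall>z\<in>j ` {x,y}. leY z (j y)" unfolding is_sup_def by (elim conjE)
  then show ?thesis by simp
qed

lemma directed_image:
  assumes "poset B leB" "directed A le D" "f ` D \<subseteq> B"
    "\<And>x y. x\<in>D \<Longrightarrow> y\<in>D \<Longrightarrow> le x y \<Longrightarrow> leB (f x) (f y)"
  shows "directed B leB (f ` D)"
proof (rule directedI[OF assms(1,3)])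
  show "f ` D \<noteq> {}" using directed_ne[OF assms(2)] by auto
next
  fix x y assume "x \<in> f ` D" "y \<in> f ` D"
  then obtain a b where ab: "a\<in>D" "b\<in>D" "x = f a" "y = f b" by auto
  obtain c where c: "c\<in>D" "le a c" "le b c" using directed_pair[OF assms(2) ab(1,2)] by blast
  have "leB (f a) (f c)" "leB (f b) (f c)" using assms(4)[OF ab(1) c(1) c(2)] assms(4)[OF ab(2) c(1) c(3)] .
  then show "\<exists>z\<in>f ` D. leB x z \<and> leB y z" using c(1) ab(3,4) by blast
qed

lemma mcp_directed:
  assumes "poset X le" "poset Y leY" "mcp X le Y leY j" "directed X le D"
  shows "directed Y leY (j ` D)"
proof (rule directed_image[OF assms(2,4)])
  have DX: "D \<subseteq> X" by (rule directed_sub[OF assms(4)])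
  show "j ` D \<subseteq> Y" using DX mcp_into[OF assms(3)] by blast
  fix x y assume "x\<in>D" "y\<in>D" "le x y"
  then show "leY (j x) (j y)" using DX mcp_mono[OF assms(1,3)] by blast
qed

definition supr :: "'a set \<Rightarrow> ('a \<Rightarrow> 'a \<Rightarrow> bool) \<Rightarrow> 'a set \<Rightarrow> 'a" where
  "supr A le D = (SOME s. is_sup A le D s)"

lemma supr: "dcpo A le \<Longrightarrow> directed A le D \<Longrightarrow> is_sup A le D (supr A le D)"
  unfolding dcpo_def supr_def by (metis someI_ex)

lemma dcpo_poset: "dcpo A le \<Longrightarrow> poset A le" unfolding dcpo_def by blast

lemma lower_A: "lower_set A le A" unfolding lower_set_def by blast
lemma dsup_A: "dsup_closed A le A" unfolding dsup_closed_def is_sup_def by blast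

lemma hat_incl: "S \<subseteq> hat A le S" unfolding hat_def by blast
lemma hat_least: "S \<subseteq> C \<Longrightarrow> lower_set A le C \<Longrightarrow> dsup_closed A le C \<Longrightarrow> hat A le S \<subseteq> C"
  unfolding hat_def by blast
lemma hat_sub: "S \<subseteq> A \<Longrightarrow> hat A le S \<subseteq> A"
  using hat_least[OF _ lower_A dsup_A] .
lemma hat_lower: assumes "S \<subseteq> A" shows "lower_set A le (hat A le S)"
  unfolding lower_set_def
proof (intro conjI ballI impI)
  show "hat A le S \<subseteq> A" using hat_sub[OF assms] .
  fix x y assume x: "x \<in> hat A le S" and y: "y \<in> A" and yx: "le y x"
  show "y \<in> hat A le S" unfolding hat_def
  proof (rule InterI)
    fix C assume "C \<in> {C. S \<subseteq> C \<and> lower_set A le C \<and> dsup_closed A le C}"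
    then have C: "S \<subseteq> C" "lower_set A le C" "dsup_closed A le C" by auto
    have "x \<in> C" using x C hat_least[of S C A le] by blast
    then show "y \<in> C" using C(2) y yx unfolding lower_set_def by blast
  qed
qed
lemma hat_dsup: assumes "S \<subseteq> A" shows "dsup_closed A le (hat A le S)"
  unfolding dsup_closed_def
proof (intro conjI allI impI)
  show "hat A le S \<subseteq> A" using hat_sub[OF assms] .
  fix D s assume a: "directed A le D \<and> D \<subseteq> hat A le S \<and> is_sup A le D s"
  show "s \<in> hat A le S" unfolding hat_def
  proof (rule InterI)
    fix C assume "C \<in> {C. S \<subseteq> C \<and> lower_set A le C \<and> dsup_closed A le C}"
    then have C: "S \<subseteq> C" "lower_set A le C" "dsup_closed A le C" by auto
    have "D \<subseteq> C" using a C hat_least[of S C A le] by blast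
    then show "s \<in> C" using C(3) a unfolding dsup_closed_def by blast
  qed
qed

lemma hat_lowerD: "S \<subseteq> A \<Longrightarrow> x \<in> hat A le S \<Longrightarrow> y \<in> A \<Longrightarrow> le y x \<Longrightarrow> y \<in> hat A le S"
  using hat_lower[of S A le] unfolding lower_set_def by blast
lemma hat_dsupD: "S \<subseteq> A \<Longrightarrow> directed A le D \<Longrightarrow> D \<subseteq> hat A le S \<Longrightarrow> is_sup A le D s \<Longrightarrow> s \<in> hat A le S"
  using hat_dsup[of S A le] unfolding dsup_closed_def by blast

lemma hat_mono: assumes "S \<subseteq> T" "T \<subseteq> A" shows "hat A le S \<subseteq> hat A le T"
  using hat_least[of S "hat A le T" A le] hat_lower[OF assms(2)] hat_dsup[OF assms(2)] hat_incl[of T A le] assms(1) by blast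
lemma hat_idem: assumes "S \<subseteq> A" shows "hat A le (hat A le S) = hat A le S"
  using hat_least[of "hat A le S" "hat A le S" A le] hat_lower[OF assms] hat_dsup[OF assms] hat_incl[of "hat A le S" A le] by blast
lemma dcl_incl: "S \<subseteq> dclosure A le S" unfolding dclosure_def by blast
lemma dcl_least: "S \<subseteq> C \<Longrightarrow> dsup_closed A le C \<Longrightarrow> dclosure A le S \<subseteq> C"
  unfolding dclosure_def by blast
lemma dcl_sub: "S \<subseteq> A \<Longrightarrow> dclosure A le S \<subseteq> A"
  using dcl_least[OF _ dsup_A] .
lemma dcl_dsup: assumes "S \<subseteq> A" shows "dsup_closed A le (dclosure A le S)"
  unfolding dsup_closed_def
proof (intro conjI allI impI)
  show "dclosure A le S \<subseteq> A" using dcl_sub[OF assms] .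
  fix D s assume a: "directed A le D \<and> D \<subseteq> dclosure A le S \<and> is_sup A le D s"
  show "s \<in> dclosure A le S" unfolding dclosure_def
  proof (rule InterI)
    fix C assume "C \<in> {C. S \<subseteq> C \<and> dsup_closed A le C}"
    then have C: "S \<subseteq> C" "dsup_closed A le C" by auto
    have "D \<subseteq> C" using a C dcl_least[of S C A le] by blast
    then show "s \<in> C" using C(2) a unfolding dsup_closed_def by blast
  qed
qed

lemma down_lower: assumes "poset A le" "a\<in>A" shows "lower_set A le (down A le a)"
  unfolding lower_set_def down_def
proof (intro conjI ballI impI)
  show "{x\<in>A. le x a} \<subseteq> A" by blast
  fix x y assume "x \<in> {x\<in>A. le x a}" "y\<in>A" "le y x"
  then show "y \<in> {x\<in>A. le x a}" using posetD(3)[OF assms(1), of y x a] assms(2) by blast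
qed
lemma down_dsup: assumes "poset A le" "a\<in>A" shows "dsup_closed A le (down A le a)"
  unfolding dsup_closed_def down_def
proof (intro conjI allI impI)
  show "{x\<in>A. le x a} \<subseteq> A" by blast
  fix D s assume h: "directed A le D \<and> D \<subseteq> {x\<in>A. le x a} \<and> is_sup A le D s"
  then have "le s a" using assms(2) unfolding is_sup_def by blast
  then show "s \<in> {x\<in>A. le x a}" using h unfolding is_sup_def by blast
qed
lemma hat_down: "poset A le \<Longrightarrow> a\<in>A \<Longrightarrow> S \<subseteq> down A le a \<Longrightarrow> hat A le S \<subseteq> down A le a"
  using hat_least[of S "down A le a" A le] down_lower[of A le a] down_dsup[of A le a] by blast

lemma hat_below:
  assumes "poset A le" "directed A le D" "is_sup A le D y" "z \<in> A" "le z y"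
  shows "z \<in> hat A le D"
proof -
  have DA: "D \<subseteq> A" using directed_sub[OF assms(2)] .
  have "y \<in> hat A le D" using hat_dsupD[OF DA assms(2) hat_incl assms(3)] .
  then show ?thesis using hat_lowerD[of D A y le z] DA assms(4,5) by blast
qed


lemma K_lemma:
  assumes pX: "poset X le" and pZ: "poset Z leZ" and mT: "mcp X le Z leZ T"
    and SX: "S \<subseteq> X" and uZ: "u \<in> Z" and ub: "\<forall>a\<in>S. leZ (T a) u"
  shows "\<forall>a\<in>hat X le S. leZ (T a) u"
proof -
  let ?C = "{a\<in>X. leZ (T a) u}"
  have "lower_set X le ?C"
    unfolding lower_set_def
  proof (intro conjI ballI impI)
    fix x y assume x: "x \<in> ?C" and y: "y \<in> X" and yx: "le y x"
    have xX: "x \<in> X" and xu: "leZ (T x) u" using x by auto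
    have "leZ (T y) (T x)" using mcp_mono[OF pX mT y xX yx] .
    then have "leZ (T y) u" using posetD(3)[OF pZ mcp_into[OF mT y] mcp_into[OF mT xX] uZ] xu by blast
    then show "y \<in> ?C" using y by blast
  qed auto
  moreover have "dsup_closed X le ?C"
    unfolding dsup_closed_def
  proof (intro conjI allI impI)
    fix D s assume a: "directed X le D \<and> D \<subseteq> ?C \<and> is_sup X le D s"
    then have "is_sup Z leZ (T ` D) (T s)" using mcp_sup[OF mT] by blast
    moreover have "\<forall>z\<in>T ` D. leZ z u" using a by blast
    ultimately have "leZ (T s) u" using uZ unfolding is_sup_def by blast
    moreover have "s \<in> X" using a unfolding is_sup_def by blast
    ultimately show "s \<in> ?C" by blast
  qed auto
  ultimately have "hat X le S \<subseteq> ?C" using hat_least[of S ?C X le] ub SX by blast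
  then show ?thesis by blast
qed

locale emb =
  fixes X :: "'a set" and le :: "'a \<Rightarrow> 'a \<Rightarrow> bool"
    and Y :: "'b set" and leY :: "'b \<Rightarrow> 'b \<Rightarrow> bool" and j :: "'a \<Rightarrow> 'b"
  assumes pX: "poset X le"
    and H: "\<forall>D. directed X le D \<longrightarrow> directed X le (hat X le D)"
    and dY: "dcpo Y leY" and mj: "mcp X le Y leY j"
    and refl_hat: "\<And>B a. directed X le B \<Longrightarrow> a \<in> X \<Longrightarrow> j a \<in> hat Y leY (j ` B) \<Longrightarrow> a \<in> hat X le B"
begin

lemma pY: "poset Y leY" using dcpo_poset[OF dY] .

lemma jin: "x \<in> X \<Longrightarrow> j x \<in> Y" using mcp_into[OF mj] .

lemma jmono: "x \<in> X \<Longrightarrow> y \<in> X \<Longrightarrow> le x y \<Longrightarrow> leY (j x) (j y)"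
  using mcp_mono[OF pX mj] .

lemma transY: "a \<in> Y \<Longrightarrow> b \<in> Y \<Longrightarrow> c \<in> Y \<Longrightarrow> leY a b \<Longrightarrow> leY b c \<Longrightarrow> leY a c"
  using posetD(3)[OF pY] .

definition phi :: "'b \<Rightarrow> 'a set" where "phi y = {a\<in>X. leY (j a) y}"

lemma phi_lower: assumes y: "y \<in> Y" shows "lower_set X le (phi y)"
  unfolding lower_set_def
proof (intro conjI ballI impI)
  show "phi y \<subseteq> X" unfolding phi_def by blast
  fix a b assume a: "a \<in> phi y" and b: "b \<in> X" and ba: "le b a"
  have aX: "a \<in> X" and ay: "leY (j a) y" using a unfolding phi_def by auto
  have "leY (j b) (j a)" using jmono[OF b aX ba] .
  then have "leY (j b) y" using transY[OF jin[OF b] jin[OF aX] y] ay by blast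
  then show "b \<in> phi y" using b unfolding phi_def by blast
qed

lemma phi_dsup: assumes y: "y \<in> Y" shows "dsup_closed X le (phi y)"
  unfolding dsup_closed_def
proof (intro conjI allI impI)
  show "phi y \<subseteq> X" unfolding phi_def by blast
  fix D s assume a: "directed X le D \<and> D \<subseteq> phi y \<and> is_sup X le D s"
  then have "is_sup Y leY (j ` D) (j s)" using mcp_sup[OF mj] by blast
  moreover have "\<forall>z\<in>j ` D. leY z y" using a unfolding phi_def by blast
  ultimately have "leY (j s) y" using y unfolding is_sup_def by blast
  moreover have "s \<in> X" using a unfolding is_sup_def by blast
  ultimately show "s \<in> phi y" unfolding phi_def by blast
qed

lemma PHI:
  assumes B: "directed X le B" and sup: "is_sup Y leY (j ` B) y"
  shows "phi y = hat X le B"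
proof
  have y: "y \<in> Y" using sup unfolding is_sup_def by blast
  have BX: "B \<subseteq> X" using directed_sub[OF B] .
  have "B \<subseteq> phi y" using sup BX unfolding is_sup_def phi_def by blast
  then show "hat X le B \<subseteq> phi y" using hat_least[of B "phi y" X le] phi_lower[OF y] phi_dsup[OF y] by blast
  show "phi y \<subseteq> hat X le B"
  proof
    fix a assume a: "a \<in> phi y"
    have aX: "a \<in> X" and ay: "leY (j a) y" using a unfolding phi_def by auto
    have jB: "directed Y leY (j ` B)" using mcp_directed[OF pX pY mj B] .
    have "j a \<in> hat Y leY (j ` B)"
      using hat_below[OF pY jB sup jin[OF aX] ay] .
    then show "a \<in> hat X le B" using refl_hat[OF B aX] by blast
  qed
qed

lemma phi_directed:
  assumes B: "directed X le B" and sup: "is_sup Y leY (j ` B) y"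
  shows "directed X le (phi y)"
  using PHI[OF assms] H B by simp

lemma phi_sup:
  assumes B: "directed X le B" and sup: "is_sup Y leY (j ` B) y"
  shows "is_sup Y leY (j ` phi y) y"
proof -
  have BP: "B \<subseteq> phi y" using PHI[OF assms] hat_incl[of B X le] by simp
  show ?thesis unfolding is_sup_def
  proof (intro conjI ballI impI)
    show "y \<in> Y" using sup unfolding is_sup_def by blast
    fix z assume "z \<in> j ` phi y" then show "leY z y" unfolding phi_def by blast
  next
    fix u assume u: "u \<in> Y" "\<forall>z\<in>j ` phi y. leY z u"
    then have "\<forall>z\<in>j ` B. leY z u" using BP by blast
    then show "leY y u" using sup u(1) unfolding is_sup_def by blast
  qed
qed

definition S' :: "'b set" where
  "S' = {s. \<exists>B. directed X le B \<and> is_sup Y leY (j ` B) s}"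

lemma good: assumes "d \<in> S'" shows "directed X le (phi d) \<and> is_sup Y leY (j ` phi d) d"
proof -
  obtain B where B: "directed X le B" "is_sup Y leY (j ` B) d" using assms unfolding S'_def by blast
  show ?thesis using phi_directed[OF B] phi_sup[OF B] by blast
qed

lemma DS:
  assumes D: "directed Y leY D" and sup: "is_sup Y leY D s"
    and DS: "D \<subseteq> S'"
  defines "U \<equiv> {a\<in>X. \<exists>d\<in>D. leY (j a) d}"
  shows "directed X le U \<and> is_sup Y leY (j ` U) s"
proof -
  have DY: "D \<subseteq> Y" using directed_sub[OF D] .
  have sY: "s \<in> Y" using sup unfolding is_sup_def by blast
  have U_eq: "U = (\<Union>d\<in>D. phi d)" unfolding U_def phi_def by blast
  have dirU: "directed X le U"
  proof (rule directedI[OF pX])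
    show "U \<subseteq> X" unfolding U_def by blast
    obtain d where d: "d \<in> D" using directed_ne[OF D] by blast
    have "d \<in> S'" using d DS by blast
    then obtain a where "a \<in> phi d" using directed_ne good by blast
    then show "U \<noteq> {}" using U_eq d by blast
  next
    fix x y assume "x \<in> U" "y \<in> U"
    then obtain d1 d2 where d: "d1 \<in> D" "d2 \<in> D" "x \<in> phi d1" "y \<in> phi d2" using U_eq by blast
    then obtain d3 where d3: "d3 \<in> D" "leY d1 d3" "leY d2 d3" using directed_pair[OF D] by blast
    have xX: "x \<in> X" "leY (j x) d1" and yX: "y \<in> X" "leY (j y) d2" using d unfolding phi_def by auto
    have "leY (j x) d3" using transY[OF jin[OF xX(1)] _ _ xX(2) d3(2)] d DY d3 by blast
    moreover have "leY (j y) d3" using transY[OF jin[OF yX(1)] _ _ yX(2) d3(3)] d DY d3 by blast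
    ultimately have "x \<in> phi d3" "y \<in> phi d3" using xX yX unfolding phi_def by auto
    moreover have "d3 \<in> S'" using d3(1) DS by blast
    ultimately obtain z where "z \<in> phi d3" "le x z" "le y z"
      using directed_pair[of X le "phi d3" x y] good[of d3] by blast
    then show "\<exists>z\<in>U. le x z \<and> le y z" using U_eq d3(1) by blast
  qed
  have "is_sup Y leY (j ` U) s"
    unfolding is_sup_def
  proof (intro conjI ballI impI)
    show "s \<in> Y" using sY .
  next
    fix x assume "x \<in> j ` U"
    then obtain a d where ad: "a \<in> X" "d \<in> D" "leY (j a) d" "x = j a" unfolding U_def by blast
    have "leY d s" using sup ad(2) unfolding is_sup_def by blast
    then show "leY x s" using transY[OF jin[OF ad(1)] _ sY ad(3)] ad DY by blast
  next
    fix u assume u: "u \<in> Y" "\<forall>x\<in>j ` U. leY x u"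
    have "\<forall>d\<in>D. leY d u"
    proof
      fix d assume d: "d \<in> D"
      have "j ` phi d \<subseteq> j ` U" using U_eq d by blast
      then have "\<forall>z\<in>j ` phi d. leY z u" using u(2) by blast
      moreover have "is_sup Y leY (j ` phi d) d" using good[of d] d DS by blast
      ultimately show "leY d u" using u(1) unfolding is_sup_def by blast
    qed
    then show "leY s u" using sup u(1) unfolding is_sup_def by blast
  qed
  then show ?thesis using dirU by blast
qed

lemma S'_dsup: "dsup_closed Y leY S'"
  unfolding dsup_closed_def
proof (intro conjI allI impI)
  show "S' \<subseteq> Y" unfolding S'_def is_sup_def by blast
  fix D s assume a: "directed Y leY D \<and> D \<subseteq> S' \<and> is_sup Y leY D s"
  then have "directed X le {a\<in>X. \<exists>d\<in>D. leY (j a) d} \<and> is_sup Y leY (j ` {a\<in>X. \<exists>d\<in>D. leY (j a) d}) s"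
    using DS[of D s] by blast
  then show "s \<in> S'" unfolding S'_def by blast
qed

lemma jX_S': "j ` X \<subseteq> S'"
proof
  fix y assume "y \<in> j ` X"
  then obtain x where x: "x \<in> X" "y = j x" by blast
  have "directed X le {x}" using directed_single[OF pX x(1)] .
  moreover have "is_sup Y leY (j ` {x}) y" using is_sup_single[OF pY jin[OF x(1)]] x(2) by simp
  ultimately show "y \<in> S'" unfolding S'_def by blast
qed

lemma dense_all:
  assumes dense: "dense Y leY (j ` X)" and y: "y \<in> Y"
  shows "directed X le (phi y) \<and> is_sup Y leY (j ` phi y) y"
proof -
  have "Y \<subseteq> S'" using dense dcl_least[OF jX_S' S'_dsup] unfolding dense_def by blast
  then show ?thesis using y good[of y] by blast
qed

end


lemma hat_fwd:
  assumes pX: "poset X le" and pY: "poset Y leY" and mj: "mcp X le Y leY j"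
    and B: "directed X le B" and a: "a \<in> hat X le B"
  shows "j a \<in> hat Y leY (j ` B)"
proof -
  have BX: "B \<subseteq> X" using directed_sub[OF B] .
  have jBY: "j ` B \<subseteq> Y" using BX mcp_into[OF mj] by blast
  let ?H = "hat Y leY (j ` B)"
  let ?C = "{x\<in>X. j x \<in> ?H}"
  have "lower_set X le ?C"
    unfolding lower_set_def
  proof (intro conjI ballI impI)
    fix x y assume x: "x \<in> ?C" and y: "y \<in> X" and yx: "le y x"
    have xX: "x \<in> X" and xH: "j x \<in> ?H" using x by auto
    have "leY (j y) (j x)" using mcp_mono[OF pX mj y xX yx] .
    then have "j y \<in> ?H" using hat_lowerD[OF jBY xH mcp_into[OF mj y]] by blast
    then show "y \<in> ?C" using y by blast
  qed auto
  moreover have "dsup_closed X le ?C"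
    unfolding dsup_closed_def
  proof (intro conjI allI impI)
    fix D s assume h: "directed X le D \<and> D \<subseteq> ?C \<and> is_sup X le D s"
    then have D: "directed X le D" and sup: "is_sup X le D s" by auto
    have "is_sup Y leY (j ` D) (j s)" using mcp_sup[OF mj D sup] .
    moreover have "directed Y leY (j ` D)" using mcp_directed[OF pX pY mj D] .
    moreover have "j ` D \<subseteq> ?H" using h by blast
    ultimately have "j s \<in> ?H" using hat_dsupD[OF jBY] by blast
    moreover have "s \<in> X" using sup unfolding is_sup_def by blast
    ultimately show "s \<in> ?C" by blast
  qed auto
  moreover have "B \<subseteq> ?C" using BX hat_incl[of "j ` B" Y leY] by blast
  ultimately have "hat X le B \<subseteq> ?C" using hat_least[of B ?C X le] by blast
  then show ?thesis using a by blast
qed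

lemma derive_mcp:
  assumes pX: "poset X le" and dY: "dcpo Y leY" and jX: "j ` X \<subseteq> Y"
    and hc: "\<forall>B a. directed X le B \<and> a \<in> X \<longrightarrow> (j a \<in> hat Y leY (j ` B) \<longleftrightarrow> a \<in> hat X le B)"
  shows "mcp X le Y leY j"
proof -
  have pY: "poset Y leY" using dcpo_poset[OF dY] .
  have mono: "leY (j x) (j y)" if x: "x \<in> X" and y: "y \<in> X" and xy: "le x y" for x y
  proof -
    have "y \<in> hat X le {y}" using hat_incl[of "{y}" X le] by blast
    then have "x \<in> hat X le {y}" using hat_lowerD[of "{y}" X y le x] x y xy by blast
    moreover have "directed X le {y}" using directed_single[OF pX y] .
    ultimately have "j x \<in> hat Y leY (j ` {y})" using hc x by blast
    moreover have "hat Y leY (j ` {y}) \<subseteq> down Y leY (j y)"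
    proof (rule hat_down[OF pY])
      show "j y \<in> Y" using jX y by blast
      then show "j ` {y} \<subseteq> down Y leY (j y)" using posetD(1)[OF pY] unfolding down_def by auto
    qed
    ultimately show ?thesis unfolding down_def by blast
  qed
  show ?thesis unfolding mcp_def
  proof (intro conjI allI impI)
    show "j ` X \<subseteq> Y" using jX .
    fix D s assume h: "directed X le D \<and> is_sup X le D s"
    then have D: "directed X le D" and sup: "is_sup X le D s" by auto
    have DX: "D \<subseteq> X" using directed_sub[OF D] .
    have sX: "s \<in> X" using sup unfolding is_sup_def by blast
    have jD: "directed Y leY (j ` D)"
      by (rule directed_image[OF pY D]) (use DX jX mono in blast)+
    define t where "t = supr Y leY (j ` D)"
    have t: "is_sup Y leY (j ` D) t" using supr[OF dY jD] unfolding t_def .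
    have tY: "t \<in> Y" using t unfolding is_sup_def by blast
    have "s \<in> hat X le D" using hat_dsupD[OF DX D hat_incl sup] .
    then have "j s \<in> hat Y leY (j ` D)" using hc D sX by blast
    moreover have "hat Y leY (j ` D) \<subseteq> down Y leY t"
      by (rule hat_down[OF pY tY]) (use t jX DX in \<open>auto simp: is_sup_def down_def\<close>)
    ultimately have jst: "leY (j s) t" unfolding down_def by blast
    show "is_sup Y leY (j ` D) (j s)" unfolding is_sup_def
    proof (intro conjI ballI impI)
      show "j s \<in> Y" using jX sX by blast
      fix z assume "z \<in> j ` D"
      then obtain d where d: "d \<in> D" "z = j d" by blast
      have "le d s" using sup d(1) unfolding is_sup_def by blast
      then show "leY z (j s)" using mono[of d s] d DX sX by blast
    next
      fix u assume u: "u \<in> Y" "\<forall>z\<in>j ` D. leY z u"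
      then have "leY t u" using t unfolding is_sup_def by blast
      then show "leY (j s) u" using posetD(3)[OF pY _ tY u(1) jst] jX sX by blast
    qed
  qed
qed

context emb
begin

lemma univ:
  fixes Z :: "'z set" and leZ :: "'z \<Rightarrow> 'z \<Rightarrow> bool" and T :: "'a \<Rightarrow> 'z"
  assumes dense: "dense Y leY (j ` X)" and dZ: "dcpo Z leZ" and mT: "mcp X le Z leZ T"
  shows "\<exists>Tb. mcp Y leY Z leZ Tb \<and> (\<forall>x\<in>X. Tb (j x) = T x) \<and>
           (\<forall>Tb'. mcp Y leY Z leZ Tb' \<and> (\<forall>x\<in>X. Tb' (j x) = T x) \<longrightarrow>
                  (\<forall>y\<in>Y. Tb' y = Tb y))"
proof -
  have pZ: "poset Z leZ" using dcpo_poset[OF dZ] .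
  define Tb where "Tb y = supr Z leZ (T ` phi y)" for y
  have phiX: "phi y \<subseteq> X" for y unfolding phi_def by blast
  have TbS: "is_sup Z leZ (T ` phi y) (Tb y)" if y: "y \<in> Y" for y
  proof -
    have "directed X le (phi y)" using dense_all[OF dense y] by blast
    then have "directed Z leZ (T ` phi y)" using mcp_directed[OF pX pZ mT] by blast
    then show ?thesis unfolding Tb_def using supr[OF dZ] by blast
  qed
  have TbZ: "Tb y \<in> Z" if "y \<in> Y" for y using TbS[OF that] unfolding is_sup_def by blast
  have mTb: "mcp Y leY Z leZ Tb" unfolding mcp_def
  proof (intro conjI allI impI)
    show "Tb ` Y \<subseteq> Z" using TbZ by blast
    fix D s assume h: "directed Y leY D \<and> is_sup Y leY D s"
    then have D: "directed Y leY D" and sup: "is_sup Y leY D s" by auto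
    have DY: "D \<subseteq> Y" using directed_sub[OF D] .
    have sY: "s \<in> Y" using sup unfolding is_sup_def by blast
    have DS': "D \<subseteq> S'"
    proof
      fix d assume "d \<in> D"
      then have "directed X le (phi d) \<and> is_sup Y leY (j ` phi d) d" using dense_all[OF dense] DY by blast
      then show "d \<in> S'" unfolding S'_def by blast
    qed
    define U where "U = {a\<in>X. \<exists>d\<in>D. leY (j a) d}"
    have U: "directed X le U" "is_sup Y leY (j ` U) s" using DS[OF D sup DS'] unfolding U_def by blast+
    have phis: "phi s = hat X le U" using PHI[OF U] .
    show "is_sup Z leZ (Tb ` D) (Tb s)" unfolding is_sup_def
    proof (intro conjI ballI impI)
      show "Tb s \<in> Z" using TbZ[OF sY] .
      fix z assume "z \<in> Tb ` D"
      then obtain d where d: "d \<in> D" "z = Tb d" by blast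
      have dY: "d \<in> Y" using d DY by blast
      have ds: "leY d s" using sup d(1) unfolding is_sup_def by blast
      have "\<forall>w\<in>T ` phi d. leZ w (Tb s)"
      proof
        fix w assume "w \<in> T ` phi d"
        then obtain a where a: "a \<in> phi d" "w = T a" by blast
        have aX: "a \<in> X" and ad: "leY (j a) d" using a unfolding phi_def by auto
        have "leY (j a) s" using transY[OF jin[OF aX] dY sY ad ds] .
        then have "a \<in> phi s" using aX unfolding phi_def by blast
        then show "leZ w (Tb s)" using TbS[OF sY] a(2) unfolding is_sup_def by blast
      qed
      then show "leZ z (Tb s)" using TbS[OF dY] TbZ[OF sY] d(2) unfolding is_sup_def by blast
    next
      fix u assume u: "u \<in> Z" "\<forall>z\<in>Tb ` D. leZ z u"
      have "\<forall>a\<in>U. leZ (T a) u"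
      proof
        fix a assume "a \<in> U"
        then obtain d where ad: "a \<in> X" "d \<in> D" "leY (j a) d" unfolding U_def by blast
        have dY: "d \<in> Y" using ad DY by blast
        have "a \<in> phi d" using ad unfolding phi_def by blast
        then have "leZ (T a) (Tb d)" using TbS[OF dY] unfolding is_sup_def by blast
        moreover have "leZ (Tb d) u" using u ad(2) by blast
        ultimately show "leZ (T a) u"
          using posetD(3)[OF pZ mcp_into[OF mT ad(1)] TbZ[OF dY] u(1)] by blast
      qed
      then have "\<forall>a\<in>hat X le U. leZ (T a) u"
        using K_lemma[OF pX pZ mT _ u(1)] directed_sub[OF U(1)] by blast
      then have "\<forall>w\<in>T ` phi s. leZ w u" using phis by blast
      then show "leZ (Tb s) u" using TbS[OF sY] u(1) unfolding is_sup_def by blast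
    qed
  qed
  have ext: "Tb (j x) = T x" if x: "x \<in> X" for x
  proof -
    have jxY: "j x \<in> Y" using jin[OF x] .
    have "phi (j x) = hat X le {x}"
      using PHI[OF directed_single[OF pX x]] is_sup_single[OF pY jxY] by simp
    moreover have "hat X le {x} \<subseteq> down X le x"
      using hat_down[OF pX x] posetD(1)[OF pX x] unfolding down_def using x by blast
    ultimately have sub: "phi (j x) \<subseteq> down X le x" by simp
    have xin: "x \<in> phi (j x)" using x posetD(1)[OF pY jxY] unfolding phi_def by blast
    have "is_sup Z leZ (T ` phi (j x)) (T x)" unfolding is_sup_def
    proof (intro conjI ballI impI)
      show "T x \<in> Z" using mcp_into[OF mT x] .
      fix z assume "z \<in> T ` phi (j x)"
      then obtain a where a: "a \<in> phi (j x)" "z = T a" by blast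
      then have "a \<in> X" "le a x" using sub unfolding down_def by auto
      then show "leZ z (T x)" using mcp_mono[OF pX mT _ x] a(2) by blast
    next
      fix u assume "u \<in> Z" "\<forall>z\<in>T ` phi (j x). leZ z u"
      then show "leZ (T x) u" using xin by blast
    qed
    then show ?thesis using is_sup_unique[OF pZ TbS[OF jxY]] by blast
  qed
  have uniq: "Tb' y = Tb y" if h: "mcp Y leY Z leZ Tb'" "\<forall>x\<in>X. Tb' (j x) = T x" and y: "y \<in> Y" for Tb' y
  proof -
    have dp: "directed X le (phi y)" and sp: "is_sup Y leY (j ` phi y) y" using dense_all[OF dense y] by auto
    have "directed Y leY (j ` phi y)" using mcp_directed[OF pX pY mj dp] .
    then have "is_sup Z leZ (Tb' ` j ` phi y) (Tb' y)" using mcp_sup[OF h(1) _ sp] by blast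
    moreover have "Tb' ` j ` phi y = T ` phi y" using h(2) phiX[of y] by force
    ultimately have "is_sup Z leZ (T ` phi y) (Tb' y)" by simp
    then show ?thesis using is_sup_unique[OF pZ _ TbS[OF y]] by blast
  qed
  show ?thesis using mTb ext uniq by blast
qed

end

lemma completion_from_emb:
  assumes pX: "poset X le" and H: "\<forall>D. directed X le D \<longrightarrow> directed X le (hat X le D)"
    and dY: "dcpo Y leY" and jX: "j ` X \<subseteq> Y" and dense: "dense Y leY (j ` X)"
    and hc: "\<forall>B a. directed X le B \<and> a \<in> X \<longrightarrow> (j a \<in> hat Y leY (j ` B) \<longleftrightarrow> a \<in> hat X le B)"
  shows "directed_completion TYPE('z) X le Y leY j"
proof -
  have mj: "mcp X le Y leY j" using derive_mcp[OF pX dY jX hc] .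
  interpret emb X le Y leY j
    by (unfold_locales) (use pX H dY mj hc in blast)+
  show ?thesis unfolding directed_completion_def
    using dY mj univ[OF dense] by blast
qed


definition sng :: "'a set \<Rightarrow> 'a set set" where "sng A = (\<lambda>y. {y}) ` A"
definition lsng :: "('a \<Rightarrow> 'a \<Rightarrow> bool) \<Rightarrow> 'a set \<Rightarrow> 'a set \<Rightarrow> bool" where
  "lsng le p q = le (the_elem p) (the_elem q)"

lemma sng_mem: "p \<in> sng A \<longleftrightarrow> (\<exists>a\<in>A. p = {a})" unfolding sng_def by blast

lemma sng_sub: "P \<subseteq> sng A \<Longrightarrow> P = (\<lambda>y. {y}) ` (the_elem ` P) \<and> the_elem ` P \<subseteq> A"
  unfolding sng_def by force

lemma lsng_simp[simp]: "lsng le {a} {b} = le a b" unfolding lsng_def by simp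

lemma T_poset: assumes pA: "poset A le" shows "poset (sng A) (lsng le)"
  unfolding poset_def
proof (intro conjI ballI impI)
  fix p assume "p \<in> sng A"
  then obtain a where "a \<in> A" "p = {a}" unfolding sng_def by blast
  then show "lsng le p p" using posetD(1)[OF pA] by simp
next
  fix p q assume "p \<in> sng A" "q \<in> sng A" and h: "lsng le p q \<and> lsng le q p"
  then obtain a b where "a \<in> A" "p = {a}" "b \<in> A" "q = {b}" unfolding sng_def by blast
  then show "p = q" using posetD(2)[OF pA, of a b] h by simp
next
  fix p q r assume "p \<in> sng A" "q \<in> sng A" "r \<in> sng A" and h: "lsng le p q \<and> lsng le q r"
  then obtain a b c where "a \<in> A" "p = {a}" "b \<in> A" "q = {b}" "c \<in> A" "r = {c}" unfolding sng_def by blast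
  then show "lsng le p r" using posetD(3)[OF pA, of a b c] h by simp
qed

lemma T_sup: assumes "D \<subseteq> A"
  shows "is_sup (sng A) (lsng le) ((\<lambda>y. {y}) ` D) {s} \<longleftrightarrow> is_sup A le D s"
  using assms unfolding is_sup_def sng_def by auto

lemma T_dir: assumes pA: "poset A le" and DA: "D \<subseteq> A"
  shows "directed (sng A) (lsng le) ((\<lambda>y. {y}) ` D) \<longleftrightarrow> directed A le D"
proof
  assume d: "directed (sng A) (lsng le) ((\<lambda>y. {y}) ` D)"
  show "directed A le D"
  proof (rule directedI[OF pA DA])
    show "D \<noteq> {}" using directed_ne[OF d] by blast
    fix a b assume ab: "a \<in> D" "b \<in> D"
    then obtain z where "z \<in> (\<lambda>y. {y}) ` D" "lsng le {a} z" "lsng le {b} z"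
      using directed_pair[OF d, of "{a}" "{b}"] by blast
    then show "\<exists>z\<in>D. le a z \<and> le b z" by auto
  qed
next
  assume d: "directed A le D"
  show "directed (sng A) (lsng le) ((\<lambda>y. {y}) ` D)"
  proof (rule directedI[OF T_poset[OF pA]])
    show "(\<lambda>y. {y}) ` D \<subseteq> sng A" using DA unfolding sng_def by blast
    show "(\<lambda>y. {y}) ` D \<noteq> {}" using directed_ne[OF d] by blast
    fix p q assume "p \<in> (\<lambda>y. {y}) ` D" "q \<in> (\<lambda>y. {y}) ` D"
    then obtain a b where ab: "a \<in> D" "b \<in> D" "p = {a}" "q = {b}" by blast
    then obtain z where "z \<in> D" "le a z" "le b z" using directed_pair[OF d] by blast
    then show "\<exists>z\<in>(\<lambda>y. {y}) ` D. lsng le p z \<and> lsng le q z" using ab by auto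
  qed
qed

lemma T_dcpo: assumes dA: "dcpo A le" shows "dcpo (sng A) (lsng le)"
  unfolding dcpo_def
proof (intro conjI allI impI)
  have pA: "poset A le" using dcpo_poset[OF dA] .
  show "poset (sng A) (lsng le)" using T_poset[OF pA] .
  fix P assume P: "directed (sng A) (lsng le) P"
  define D0 where "D0 = the_elem ` P"
  have PS: "P = (\<lambda>y. {y}) ` D0" "D0 \<subseteq> A" using sng_sub[OF directed_sub[OF P]] unfolding D0_def by auto
  have "directed (sng A) (lsng le) ((\<lambda>y. {y}) ` D0)" using P unfolding PS(1) .
  then have "directed A le D0" using T_dir[OF pA PS(2)] by simp
  then have "is_sup A le D0 (supr A le D0)" using supr[OF dA] by blast
  then have "is_sup (sng A) (lsng le) ((\<lambda>y. {y}) ` D0) {supr A le D0}"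
    using T_sup[OF PS(2)] by simp
  then have "is_sup (sng A) (lsng le) P {supr A le D0}" unfolding PS(1) .
  then show "\<exists>s. is_sup (sng A) (lsng le) P s" by blast
qed

lemma T_mcp: assumes pA: "poset A le" and m: "mcp X leX A le T"
  shows "mcp X leX (sng A) (lsng le) (\<lambda>x. {T x})"
  unfolding mcp_def
proof (intro conjI allI impI)
  show "(\<lambda>x. {T x}) ` X \<subseteq> sng A" using mcp_into[OF m] unfolding sng_def by blast
  fix D s assume h: "directed X leX D \<and> is_sup X leX D s"
  then have "is_sup A le (T ` D) (T s)" using mcp_sup[OF m] by blast
  moreover have TDA: "T ` D \<subseteq> A" using mcp_into[OF m] directed_sub[of X leX D] h by blast
  ultimately have "is_sup (sng A) (lsng le) ((\<lambda>y. {y}) ` (T ` D)) {T s}" using T_sup[OF TDA] by blast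
  moreover have "(\<lambda>y. {y}) ` (T ` D) = (\<lambda>x. {T x}) ` D" by auto
  ultimately show "is_sup (sng A) (lsng le) ((\<lambda>x. {T x}) ` D) {T s}" by simp
qed

lemma poset_sub: assumes "poset Y le" "C \<subseteq> Y" shows "poset C le"
  unfolding poset_def
proof (intro conjI ballI impI)
  fix x assume "x \<in> C" then show "le x x" using posetD(1)[OF assms(1)] assms(2) by blast
next
  fix x y assume "x \<in> C" "y \<in> C" "le x y \<and> le y x"
  then show "x = y" using posetD(2)[OF assms(1), of x y] assms(2) by blast
next
  fix x y z assume "x \<in> C" "y \<in> C" "z \<in> C" "le x y \<and> le y z"
  then show "le x z" using posetD(3)[OF assms(1), of x y z] assms(2) by blast
qed

lemma directed_mono_carrier: "directed C le D \<Longrightarrow> C \<subseteq> Y \<Longrightarrow> directed Y le D"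
  unfolding directed_def by blast

lemma sub_dcpo:
  assumes dY: "dcpo Y le" and CY: "C \<subseteq> Y" and Cd: "dsup_closed Y le C"
  shows "dcpo C le" and "\<And>D s. directed C le D \<Longrightarrow> is_sup C le D s \<Longrightarrow> is_sup Y le D s"
proof -
  have pY: "poset Y le" using dcpo_poset[OF dY] .
  have key: "is_sup Y le D (supr Y le D) \<and> supr Y le D \<in> C \<and> is_sup C le D (supr Y le D)"
    if D: "directed C le D" for D
  proof -
    have DY: "directed Y le D" using directed_mono_carrier[OF D CY] .
    have t: "is_sup Y le D (supr Y le D)" using supr[OF dY DY] .
    have "supr Y le D \<in> C" using Cd DY t directed_sub[OF D] unfolding dsup_closed_def by blast
    then show ?thesis using t CY unfolding is_sup_def by blast
  qed
  show "dcpo C le" unfolding dcpo_def using poset_sub[OF pY CY] key by blast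
  fix D s assume D: "directed C le D" and s: "is_sup C le D s"
  have "s = supr Y le D" using is_sup_unique[OF poset_sub[OF pY CY] s] key[OF D] by blast
  then show "is_sup Y le D s" using key[OF D] by blast
qed

lemma mcp_widen:
  assumes pY: "poset Y leY" and CY: "C \<subseteq> Y"
    and subsup: "\<And>D s. directed C leY D \<Longrightarrow> is_sup C leY D s \<Longrightarrow> is_sup Y leY D s"
    and R: "mcp Y leY (sng C) (lsng leY) R"
  shows "mcp Y leY (sng Y) (lsng leY) R"
  unfolding mcp_def
proof (intro conjI allI impI)
  have sCY: "sng C \<subseteq> sng Y" using CY unfolding sng_def by blast
  show "R ` Y \<subseteq> sng Y" using R sCY unfolding mcp_def by blast
  fix D s assume h: "directed Y leY D \<and> is_sup Y leY D s"
  then have D: "directed Y leY D" and sup: "is_sup Y leY D s" by auto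
  have pC: "poset C leY" using poset_sub[OF pY CY] .
  have sY: "s \<in> Y" using sup unfolding is_sup_def by blast
  have RD: "is_sup (sng C) (lsng leY) (R ` D) (R s)" using mcp_sup[OF R D sup] .
  have RDdir: "directed (sng C) (lsng leY) (R ` D)" using mcp_directed[OF pY T_poset[OF pC] R D] .
  have RDsub: "R ` D \<subseteq> sng C" using directed_sub[OF RDdir] .
  define D0 where "D0 = the_elem ` (R ` D)"
  have D0: "R ` D = (\<lambda>y. {y}) ` D0" "D0 \<subseteq> C" using sng_sub[OF RDsub] unfolding D0_def by auto
  have "R s \<in> sng C" using mcp_into[OF R sY] .
  then obtain s0 where s0: "s0 \<in> C" "R s = {s0}" unfolding sng_def by blast
  have "is_sup C leY D0 s0" using RD T_sup[OF D0(2)] D0(1) s0(2) by simp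
  moreover have "directed C leY D0" using T_dir[OF pC D0(2)] RDdir D0(1) by simp
  ultimately have "is_sup Y leY D0 s0" using subsup by blast
  moreover have "D0 \<subseteq> Y" using D0(2) CY by blast
  ultimately have "is_sup (sng Y) (lsng leY) ((\<lambda>y. {y}) ` D0) {s0}" using T_sup[of D0 Y leY s0] by blast
  then show "is_sup (sng Y) (lsng leY) (R ` D) (R s)" using D0(1) s0(2) by simp
qed

lemma L_dense:
  fixes Y :: "'w set" and X :: "'a set"
  assumes pX: "poset X le" and DC: "directed_completion TYPE('w set) X le Y leY j"
  shows "dense Y leY (j ` X)"
proof -
  have dY: "dcpo Y leY" and mj: "mcp X le Y leY j" using DC unfolding directed_completion_def by blast+
  have U: "\<And>(Z :: 'w set set) leZ T. dcpo Z leZ \<Longrightarrow> mcp X le Z leZ T \<Longrightarrow>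
        (\<exists>Tb. mcp Y leY Z leZ Tb \<and> (\<forall>x\<in>X. Tb (j x) = T x) \<and>
           (\<forall>Tb'. mcp Y leY Z leZ Tb' \<and> (\<forall>x\<in>X. Tb' (j x) = T x) \<longrightarrow>
                  (\<forall>y\<in>Y. Tb' y = Tb y)))"
    using DC unfolding directed_completion_def by blast
  have pY: "poset Y leY" using dcpo_poset[OF dY] .
  have jXY: "j ` X \<subseteq> Y" using mj unfolding mcp_def by blast
  define C where "C = dclosure Y leY (j ` X)"
  have CY: "C \<subseteq> Y" unfolding C_def using dcl_sub[OF jXY] .
  have Cd: "dsup_closed Y leY C" unfolding C_def using dcl_dsup[OF jXY] .
  have jXC: "j ` X \<subseteq> C" unfolding C_def using dcl_incl .
  have dC: "dcpo C leY" using sub_dcpo(1)[OF dY CY Cd] .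
  have subsup: "\<And>D s. directed C leY D \<Longrightarrow> is_sup C leY D s \<Longrightarrow> is_sup Y leY D s"
    using sub_dcpo(2)[OF dY CY Cd] .
  have mjC: "mcp X le C leY j" unfolding mcp_def
  proof (intro conjI allI impI)
    show "j ` X \<subseteq> C" using jXC .
    fix D s assume h: "directed X le D \<and> is_sup X le D s"
    then have "is_sup Y leY (j ` D) (j s)" using mcp_sup[OF mj] by blast
    moreover have "s \<in> X" using h unfolding is_sup_def by blast
    ultimately show "is_sup C leY (j ` D) (j s)" using jXC CY unfolding is_sup_def by blast
  qed
  obtain R where R: "mcp Y leY (sng C) (lsng leY) R" "\<forall>x\<in>X. R (j x) = {j x}"
    using U[OF T_dcpo[OF dC] T_mcp[OF poset_sub[OF pY CY] mjC]] by blast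
  obtain Tb where Tb: "\<forall>Tb'. mcp Y leY (sng Y) (lsng leY) Tb' \<and> (\<forall>x\<in>X. Tb' (j x) = {j x}) \<longrightarrow>
                  (\<forall>y\<in>Y. Tb' y = Tb y)"
    using U[OF T_dcpo[OF dY] T_mcp[OF pY mj]] by blast
  have R': "mcp Y leY (sng Y) (lsng leY) R" using mcp_widen[OF pY CY subsup R(1)] by blast
  have mid: "mcp Y leY Y leY (\<lambda>y. y)" unfolding mcp_def by simp
  have e: "mcp Y leY (sng Y) (lsng leY) (\<lambda>y. {y})" using T_mcp[OF pY mid] by simp
  have "Y \<subseteq> C"
  proof
    fix y assume y: "y \<in> Y"
    have "R y = Tb y" using Tb R' R(2) y by blast
    moreover have "{y} = Tb y" using Tb e y by blast
    ultimately have "R y = {y}" by simp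
    moreover have "R y \<in> sng C" using mcp_into[OF R(1) y] .
    ultimately have "{y} \<in> (\<lambda>y. {y}) ` C" unfolding sng_def by simp
    then show "y \<in> C" by auto
  qed
  then show ?thesis unfolding dense_def C_def using CY C_def by blast
qed

lemma L_hat:
  fixes Y :: "'w set" and X :: "'a set"
  assumes pX: "poset X le" and DC: "directed_completion TYPE('w set) X le Y leY j"
    and B: "directed X le B" and aX: "a \<in> X" and ja: "j a \<in> hat Y leY (j ` B)"
  shows "a \<in> hat X le B"
proof (rule ccontr)
  assume na: "a \<notin> hat X le B"
  have dY: "dcpo Y leY" and mj: "mcp X le Y leY j" using DC unfolding directed_completion_def by blast+
  have U: "\<And>(Z :: 'w set set) leZ T. dcpo Z leZ \<Longrightarrow> mcp X le Z leZ T \<Longrightarrow>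
        (\<exists>Tb. mcp Y leY Z leZ Tb \<and> (\<forall>x\<in>X. Tb (j x) = T x))"
    using DC unfolding directed_completion_def by blast
  have pY: "poset Y leY" using dcpo_poset[OF dY] .
  have BX: "B \<subseteq> X" using directed_sub[OF B] .
  have jBY: "j ` B \<subseteq> Y" using BX mcp_into[OF mj] by blast
  define Z2 :: "'w set set" where "Z2 = {{}, UNIV}"
  have Z2sup: "is_sup Z2 (\<subseteq>) P (\<Union>P)" if "\<Union>P \<in> Z2" for P
    unfolding is_sup_def using that by (intro conjI ballI impI) blast+
  have UZ: "\<Union>P \<in> Z2" if "P \<subseteq> Z2" for P
  proof (cases "UNIV \<in> P")
    case True then have "\<Union>P = UNIV" by blast
    then show ?thesis unfolding Z2_def by blast
  next
    case False
    have "\<forall>p\<in>P. p = {}"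
    proof
      fix p assume "p \<in> P"
      then have "p = {} \<or> p = UNIV" using that unfolding Z2_def by blast
      then show "p = {}" using False \<open>p \<in> P\<close> by blast
    qed
    then have "\<Union>P = {}" by blast
    then show ?thesis unfolding Z2_def by blast
  qed
  have dZ: "dcpo Z2 (\<subseteq>)" unfolding dcpo_def
  proof (intro conjI allI impI)
    show "poset Z2 (\<subseteq>)" unfolding poset_def by (intro conjI ballI impI) auto
    fix P assume "directed Z2 (\<subseteq>) P"
    then have "P \<subseteq> Z2" using directed_sub by blast
    then have "is_sup Z2 (\<subseteq>) P (\<Union>P)" using Z2sup[of P] UZ[of P] by simp
    then show "\<exists>s. is_sup Z2 (\<subseteq>) P s" by blast
  qed
  define T where "T x = (if x \<in> hat X le B then {} else (UNIV :: 'w set))" for x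
  have TZ: "T x \<in> Z2" for x unfolding T_def Z2_def by simp
  have mT: "mcp X le Z2 (\<subseteq>) T" unfolding mcp_def
  proof (intro conjI allI impI)
    show "T ` X \<subseteq> Z2" using TZ by blast
    fix D s assume h: "directed X le D \<and> is_sup X le D s"
    then have D: "directed X le D" and sup: "is_sup X le D s" by auto
    have DX: "D \<subseteq> X" using directed_sub[OF D] .
    have "T s = \<Union>(T ` D)"
    proof (cases "D \<subseteq> hat X le B")
      case True
      then have "s \<in> hat X le B" using hat_dsupD[OF BX D _ sup] by blast
      then show ?thesis using True unfolding T_def by auto
    next
      case False
      then obtain d where d: "d \<in> D" "d \<notin> hat X le B" by blast
      have "le d s" "s \<in> X" using sup d(1) unfolding is_sup_def by blast+
      moreover have "d \<in> X" using d(1) DX by blast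
      ultimately have "s \<notin> hat X le B" using d(2) hat_lowerD[of B X s le d] BX by blast
      then have "T s = UNIV" unfolding T_def by simp
      moreover have "T d = UNIV" using d unfolding T_def by simp
      ultimately show ?thesis using d(1) by blast
    qed
    moreover have "T ` D \<subseteq> Z2" using TZ by blast
    ultimately show "is_sup Z2 (\<subseteq>) (T ` D) (T s)" using Z2sup[of "T ` D"] UZ[of "T ` D"] by simp
  qed
  obtain Tb where Tb: "mcp Y leY Z2 (\<subseteq>) Tb" "\<forall>x\<in>X. Tb (j x) = T x" using U[OF dZ mT] by blast
  define C0 where "C0 = {y\<in>Y. Tb y = {}}"
  have "lower_set Y leY C0" unfolding lower_set_def
  proof (intro conjI ballI impI)
    show "C0 \<subseteq> Y" unfolding C0_def by blast
    fix x y assume x: "x \<in> C0" and y: "y \<in> Y" and yx: "leY y x"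
    have "x \<in> Y" using x unfolding C0_def by blast
    then have "Tb y \<subseteq> Tb x" using mcp_mono[OF pY Tb(1) y _ yx] by blast
    then show "y \<in> C0" using x y unfolding C0_def by blast
  qed
  moreover have "dsup_closed Y leY C0" unfolding dsup_closed_def
  proof (intro conjI allI impI)
    show "C0 \<subseteq> Y" unfolding C0_def by blast
    fix D s assume h: "directed Y leY D \<and> D \<subseteq> C0 \<and> is_sup Y leY D s"
    then have "is_sup Z2 (\<subseteq>) (Tb ` D) (Tb s)" using mcp_sup[OF Tb(1)] by blast
    moreover have "{} \<in> Z2" unfolding Z2_def by blast
    moreover have "\<forall>z\<in>Tb ` D. z \<subseteq> {}" using h unfolding C0_def by blast
    ultimately have "Tb s = {}" unfolding is_sup_def by blast
    moreover have "s \<in> Y" using h unfolding is_sup_def by blast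
    ultimately show "s \<in> C0" unfolding C0_def by blast
  qed
  moreover have "j ` B \<subseteq> C0"
  proof
    fix z assume "z \<in> j ` B"
    then obtain b where b: "b \<in> B" "z = j b" by blast
    have "b \<in> hat X le B" using b(1) hat_incl[of B X le] by blast
    then have "T b = {}" unfolding T_def by simp
    then show "z \<in> C0" using b Tb(2) BX jBY unfolding C0_def by auto
  qed
  ultimately have "hat Y leY (j ` B) \<subseteq> C0" using hat_least[of "j ` B" C0 Y leY] by blast
  then have "Tb (j a) = {}" using ja unfolding C0_def by blast
  then have "T a = {}" using Tb(2) aX by simp
  then show False using na unfolding T_def by simp
qed


lemma down_mem: "x \<in> down A le a \<longleftrightarrow> x \<in> A \<and> le x a" by (simp add: down_def)

lemma Xh_facts:
  fixes X :: "'a set"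
  assumes pX: "poset X le" and H: "\<forall>D. directed X le D \<longrightarrow> directed X le (hat X le D)"
  defines "Xh \<equiv> {A. A \<subseteq> X \<and> A = hat X le A \<and> directed X le A}"
  shows "dcpo Xh (\<subseteq>) \<and> down X le ` X \<subseteq> Xh \<and> dense Xh (\<subseteq>) (down X le ` X) \<and>
    (\<forall>B a. directed X le B \<and> a \<in> X \<longrightarrow>
       (down X le a \<in> hat Xh (\<subseteq>) (down X le ` B) \<longleftrightarrow> a \<in> hat X le B))"
proof -
  have pXh: "poset Xh (\<subseteq>)" unfolding poset_def by (intro conjI ballI impI) auto
  have XhD: "A \<subseteq> X" "lower_set X le A" "dsup_closed X le A" "directed X le A" if "A \<in> Xh" for A
  proof -
    have A: "A \<subseteq> X" "A = hat X le A" "directed X le A" using that unfolding Xh_def by auto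
    show "A \<subseteq> X" "directed X le A" using A by auto
    show "lower_set X le A" using hat_lower[OF A(1), of le] A(2) by simp
    show "dsup_closed X le A" using hat_dsup[OF A(1), of le] A(2) by simp
  qed
  have hatXh: "hat X le B \<in> Xh" if B: "directed X le B" for B
  proof -
    have BX: "B \<subseteq> X" using directed_sub[OF B] .
    show ?thesis unfolding Xh_def using hat_sub[OF BX] hat_idem[OF BX] H B by auto
  qed
  have hat_in: "hat X le S \<subseteq> A" if "S \<subseteq> A" "A \<in> Xh" for S A
    using hat_least[of S A X le] that XhD[OF that(2)] by blast
  have supU: "is_sup Xh (\<subseteq>) D (hat X le (\<Union>D))" if D: "directed Xh (\<subseteq>) D" for D
  proof -
    have DXh: "D \<subseteq> Xh" using directed_sub[OF D] .
    have UX: "\<Union>D \<subseteq> X" using DXh XhD by blast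
    have dU: "directed X le (\<Union>D)"
    proof (rule directedI[OF pX UX])
      obtain A where A: "A \<in> D" using directed_ne[OF D] by blast
      obtain a where "a \<in> A" using directed_ne XhD(4) A DXh by blast
      then show "\<Union>D \<noteq> {}" using A by blast
    next
      fix x y assume "x \<in> \<Union>D" "y \<in> \<Union>D"
      then obtain A1 A2 where A: "A1 \<in> D" "A2 \<in> D" "x \<in> A1" "y \<in> A2" by blast
      then obtain A3 where A3: "A3 \<in> D" "A1 \<subseteq> A3" "A2 \<subseteq> A3" using directed_pair[OF D] by blast
      have "directed X le A3" using XhD(4) A3(1) DXh by blast
      then obtain z where "z \<in> A3" "le x z" "le y z" using directed_pair[of X le A3 x y] A A3 by blast
      then show "\<exists>z\<in>\<Union>D. le x z \<and> le y z" using A3(1) by blast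
    qed
    show ?thesis unfolding is_sup_def
    proof (intro conjI ballI impI)
      show "hat X le (\<Union>D) \<in> Xh" using hatXh[OF dU] .
      fix A assume "A \<in> D" then show "A \<subseteq> hat X le (\<Union>D)" using hat_incl[of "\<Union>D" X le] by blast
    next
      fix B assume "B \<in> Xh" "\<forall>A\<in>D. A \<subseteq> B"
      then show "hat X le (\<Union>D) \<subseteq> B" using hat_in[of "\<Union>D" B] by blast
    qed
  qed
  have dXh: "dcpo Xh (\<subseteq>)" unfolding dcpo_def using pXh supU by blast
  have downXh: "down X le x \<in> Xh" if x: "x \<in> X" for x
  proof -
    have dx: "down X le x \<subseteq> X" unfolding down_def by blast
    have xin: "x \<in> down X le x" using x posetD(1)[OF pX x] unfolding down_def by blast
    have "directed X le (down X le x)"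
    proof (rule directedI[OF pX dx])
      show "down X le x \<noteq> {}" using xin by blast
      fix a b assume "a \<in> down X le x" "b \<in> down X le x"
      then show "\<exists>z\<in>down X le x. le a z \<and> le b z" using xin unfolding down_def by blast
    qed
    moreover have "hat X le (down X le x) = down X le x"
      using hat_down[OF pX x, of "down X le x"] hat_incl[of "down X le x" X le] by blast
    ultimately show ?thesis unfolding Xh_def using dx by simp
  qed
  have downsub: "down X le a \<subseteq> down X le b" if "a \<in> X" "b \<in> X" "le a b" for a b
    using that posetD(3)[OF pX] unfolding down_def by blast
  have down_dir: "directed Xh (\<subseteq>) (down X le ` A)" if A: "directed X le A" for A
  proof (rule directed_image[OF pXh A])
    show "down X le ` A \<subseteq> Xh" using downXh directed_sub[OF A] by blast
    fix x y assume "x \<in> A" "y \<in> A" "le x y"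
    then show "down X le x \<subseteq> down X le y" using downsub directed_sub[OF A] by blast
  qed
  have supA: "is_sup Xh (\<subseteq>) (down X le ` B) (hat X le B)" if B: "directed X le B" for B
    unfolding is_sup_def
  proof (intro conjI ballI impI)
    have BX: "B \<subseteq> X" using directed_sub[OF B] .
    show "hat X le B \<in> Xh" using hatXh[OF B] .
    fix z assume "z \<in> down X le ` B"
    then obtain b where b: "b \<in> B" "z = down X le b" by blast
    have "b \<in> hat X le B" using b(1) hat_incl[of B X le] by blast
    then show "z \<subseteq> hat X le B" using b(2) hat_lowerD[of B X b le] BX unfolding down_def by blast
  next
    fix C assume C: "C \<in> Xh" "\<forall>z\<in>down X le ` B. z \<subseteq> C"
    have "B \<subseteq> C"
    proof
      fix b assume "b \<in> B"
      then have "b \<in> down X le b" using directed_sub[OF B] posetD(1)[OF pX] unfolding down_def by blast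
      then show "b \<in> C" using C \<open>b \<in> B\<close> by blast
    qed
    then show "hat X le B \<subseteq> C" using hat_in C(1) by blast
  qed
  have dXX: "down X le ` X \<subseteq> Xh" using downXh by blast
  have dense: "dense Xh (\<subseteq>) (down X le ` X)" unfolding dense_def
  proof
    show "dclosure Xh (\<subseteq>) (down X le ` X) \<subseteq> Xh" using dcl_sub[OF dXX] .
    show "Xh \<subseteq> dclosure Xh (\<subseteq>) (down X le ` X)"
    proof
      fix A assume A: "A \<in> Xh"
      have dA: "directed X le A" using XhD(4)[OF A] .
      have "is_sup Xh (\<subseteq>) (down X le ` A) (hat X le A)" using supA[OF dA] .
      moreover have "hat X le A = A" using A unfolding Xh_def by blast
      moreover have "down X le ` A \<subseteq> dclosure Xh (\<subseteq>) (down X le ` X)"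
        using XhD(1)[OF A] dcl_incl[of "down X le ` X" Xh "(\<subseteq>)"] by blast
      ultimately show "A \<in> dclosure Xh (\<subseteq>) (down X le ` X)"
        using dcl_dsup[OF dXX] down_dir[OF dA] unfolding dsup_closed_def by metis
    qed
  qed
  have hc: "down X le a \<in> hat Xh (\<subseteq>) (down X le ` B) \<longleftrightarrow> a \<in> hat X le B"
    if B: "directed X le B" and a: "a \<in> X" for B a
  proof
    have BX: "B \<subseteq> X" using directed_sub[OF B] .
    have dB: "down X le ` B \<subseteq> Xh" using downXh BX by blast
    assume h: "down X le a \<in> hat Xh (\<subseteq>) (down X le ` B)"
    have "hat Xh (\<subseteq>) (down X le ` B) \<subseteq> down Xh (\<subseteq>) (hat X le B)"
    proof (rule hat_down[OF pXh hatXh[OF B]])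
      show "down X le ` B \<subseteq> down Xh (\<subseteq>) (hat X le B)"
      proof
        fix z assume z: "z \<in> down X le ` B"
        have "z \<subseteq> hat X le B" using supA[OF B] z unfolding is_sup_def by blast
        moreover have "z \<in> Xh" using dB z by blast
        ultimately show "z \<in> down Xh (\<subseteq>) (hat X le B)" unfolding down_mem by blast
      qed
    qed
    then have "down X le a \<in> down Xh (\<subseteq>) (hat X le B)" using h by (rule subsetD)
    then have "down X le a \<subseteq> hat X le B" unfolding down_mem by (rule conjunct2)
    moreover have "a \<in> down X le a" unfolding down_mem using a posetD(1)[OF pX a] by (rule conjI)
    ultimately show "a \<in> hat X le B" by blast
  next
    have BX: "B \<subseteq> X" using directed_sub[OF B] .
    have dB: "down X le ` B \<subseteq> Xh" using downXh BX by blast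
    assume h: "a \<in> hat X le B"
    have "hat X le B \<in> hat Xh (\<subseteq>) (down X le ` B)"
      using hat_dsupD[OF dB down_dir[OF B] hat_incl supA[OF B]] .
    moreover have "down X le a \<subseteq> hat X le B"
    proof
      fix x assume "x \<in> down X le a"
      then have "x \<in> X" "le x a" unfolding down_mem by auto
      then show "x \<in> hat X le B" using h hat_lowerD[of B X a le x] BX by blast
    qed
    ultimately show "down X le a \<in> hat Xh (\<subseteq>) (down X le ` B)"
      using hat_lowerD[OF dB, of "hat X le B" "(\<subseteq>)" "down X le a"] downXh[OF a] by blast
  qed
  show ?thesis using dXh dXX dense hc by blast
qed

theorem mainTheorem4:
  fixes X :: "'a set" and le :: "'a \<Rightarrow> 'a \<Rightarrow> bool"
    and Xb :: "'b set" and leb :: "'b \<Rightarrow> 'b \<Rightarrow> bool" and \<iota> :: "'a \<Rightarrow> 'b"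
  assumes "poset X le"
    and "\<forall>D. directed X le D \<longrightarrow> directed X le (hat X le D)"
    and "directed_completion TYPE('b set) X le Xb leb \<iota>"
  shows "dsups Xb leb (\<iota> ` X) = Xb \<and>
         directed_completion TYPE('z)
           X le {A. A \<subseteq> X \<and> A = hat X le A \<and> directed X le A} (\<subseteq>) (\<lambda>x. down X le x) \<and>
         (\<forall>(Y :: 'w set) leY j. dcpo Y leY \<and> j ` X \<subseteq> Y \<longrightarrow>
           ((directed_completion TYPE('w set) X le Y leY j \<longrightarrow>
               dense Y leY (j ` X) \<and>
               (\<forall>B a. directed X le B \<and> a \<in> X \<longrightarrow>
                  (j a \<in> hat Y leY (j ` B) \<longleftrightarrow> a \<in> hat X le B)))
            \<and>
            (dense Y leY (j ` X) \<and>
               (\<forall>B a. directed X le B \<and> a \<in> X \<longrightarrow>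
                  (j a \<in> hat Y leY (j ` B) \<longleftrightarrow> a \<in> hat X le B))
             \<longrightarrow> directed_completion TYPE('z) X le Y leY j)))"
proof -
  note pX = assms(1) and H = assms(2) and DC = assms(3)
  have P1: "dsups Xb leb (\<iota> ` X) = Xb"
  proof
    show "dsups Xb leb (\<iota> ` X) \<subseteq> Xb" unfolding dsups_def is_sup_def by blast
    have dY: "dcpo Xb leb" and mj: "mcp X le Xb leb \<iota>" using DC unfolding directed_completion_def by blast+
    have pY: "poset Xb leb" using dcpo_poset[OF dY] .
    interpret emb X le Xb leb \<iota>
      by unfold_locales (use pX H dY mj L_hat[OF pX DC] in blast)+
    show "Xb \<subseteq> dsups Xb leb (\<iota> ` X)"
    proof
      fix y assume y: "y \<in> Xb"
      have "directed X le (phi y) \<and> is_sup Xb leb (\<iota> ` phi y) y" using dense_all[OF L_dense[OF pX DC] y] .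
      moreover have "phi y \<subseteq> X" unfolding phi_def by blast
      ultimately show "y \<in> dsups Xb leb (\<iota> ` X)" unfolding dsups_def
        using mcp_directed[OF pX pY mj] by blast
    qed
  qed
  have P2: "directed_completion TYPE('z)
           X le {A. A \<subseteq> X \<and> A = hat X le A \<and> directed X le A} (\<subseteq>) (\<lambda>x. down X le x)"
    using Xh_facts[OF pX H] completion_from_emb[OF pX H] by (metis (no_types, lifting))
  have P3: "((directed_completion TYPE('w set) X le Y leY j \<longrightarrow>
               dense Y leY (j ` X) \<and>
               (\<forall>B a. directed X le B \<and> a \<in> X \<longrightarrow>
                  (j a \<in> hat Y leY (j ` B) \<longleftrightarrow> a \<in> hat X le B)))
            \<and>
            (dense Y leY (j ` X) \<and>
               (\<forall>B a. directed X le B \<and> a \<in> X \<longrightarrow>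
                  (j a \<in> hat Y leY (j ` B) \<longleftrightarrow> a \<in> hat X le B))
             \<longrightarrow> directed_completion TYPE('z) X le Y leY j))"
    if Y: "dcpo Y leY" "j ` X \<subseteq> Y" for Y :: "'w set" and leY j
  proof (intro conjI impI)
    assume DC2: "directed_completion TYPE('w set) X le Y leY j"
    have mj: "mcp X le Y leY j" using DC2 unfolding directed_completion_def by blast
    show "dense Y leY (j ` X)" using L_dense[OF pX DC2] .
    show "\<forall>B a. directed X le B \<and> a \<in> X \<longrightarrow> (j a \<in> hat Y leY (j ` B) \<longleftrightarrow> a \<in> hat X le B)"
      using L_hat[OF pX DC2] hat_fwd[OF pX dcpo_poset[OF Y(1)] mj] by blast
  next
    assume h: "dense Y leY (j ` X) \<and>
               (\<forall>B a. directed X le B \<and> a \<in> X \<longrightarrow>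
                  (j a \<in> hat Y leY (j ` B) \<longleftrightarrow> a \<in> hat X le B))"
    show "directed_completion TYPE('z) X le Y leY j"
      using completion_from_emb[OF pX H Y(1) Y(2)] h by blast
  qed
  have P3': "\<forall>(Y :: 'w set) leY j. dcpo Y leY \<and> j ` X \<subseteq> Y \<longrightarrow> ((directed_completion TYPE('w set) X le Y leY j \<longrightarrow>
               dense Y leY (j ` X) \<and>
               (\<forall>B a. directed X le B \<and> a \<in> X \<longrightarrow>
                  (j a \<in> hat Y leY (j ` B) \<longleftrightarrow> a \<in> hat X le B)))
            \<and>
            (dense Y leY (j ` X) \<and>
               (\<forall>B a. directed X le B \<and> a \<in> X \<longrightarrow>
                  (j a \<in> hat Y leY (j ` B) \<longleftrightarrow> a \<in> hat X le B))
             \<longrightarrow> directed_completion TYPE('z) X le Y leY j))"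
    apply (intro allI impI)
    apply (erule conjE)
    apply (rule P3)
     apply assumption+
    done
  show ?thesis using conjI[OF P1 conjI[OF P2 P3']] .
qed


end
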